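(* Let $n$ be a nonnegative integer and define \[ \widetilde{R}_n(a,c)=(1-a)_n(a)_n\,{}_3F_2\!\left(\left.{-n,a-c-n,c \atop \frac{a-n}{2},\frac{1+a-n}{2}}\right| \frac{1}{4}\right). \] Then, whenever all expressions are defined, \[ {}_3F_2\!\left(\left.{-n,a-c-n,c \atop \frac{a-n}{2},\frac{1+a-n}{2}}\right| \frac{1}{4}\right) =\frac{(1+c-a)_n(a-c)_n}{(1-a)_n(a)_n}\,{}_3F_2\!\left(\left.{-n,1-a-n,c \atop \frac{1+c-a-n}{2},\frac{2+c-a-n}{2}}\right| \frac{1}{4}\right), \] i.e. $\widetilde{R}_n(a,c)=\widetilde{R}_n(1+c-a,c)$. The group of transformations of $(a,c)$ generated by $(a,c)\mapsto(a,a-c-n)$ and $(a,c)\mapsto(1+c-a,c)$ is isomorphic to $S_3$ and yields the invariances $\widetilde{R}_n(a,c)=\widetilde{R}_n(a,c)=\widetilde{R}_n(a,a-c-n)=\widetilde{R}_n(1+c-a,c)=\widetilde{R}_n(1+c-a,1-a-n)=\widetilde{R}_n(1-c-n,a-c-n)=\widetilde{R}_n(1-c-n,1-a-n)$. Moreover, $\widetilde{V}_n(x,y,z)=\widetilde{R}_n\!\left(\frac{2+2x-y-z-n}{3},\frac{1+x+y-2z-2n}{3}\right)$ is invariant under all six permutations of $x,y,z$.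
   Context: For $a\in\mathbb{C}$, $(a)_0=1$ and $(a)_k=a(a+1)\cdots(a+k-1)$ for $k\ge1$. The hypergeometric series is ${}_rF_s\!\left(\left.{\alpha_1,\ldots,\alpha_r\atop \beta_1,\ldots,\beta_s}\right|z\right)=\sum_{k\ge0}\frac{(\alpha_1)_k\cdots(\alpha_r)_k}{k!(\beta_1)_k\cdots(\beta_s)_k}z^k$, with no lower parameter zero or a negative integer; when an upper parameter is $-n$ it is a finite sum over $0\le k\le n$. *)

theory Defs
  imports Complex_Main
begin

definition lower_ok :: "complex \<Rightarrow> bool" where
  "lower_ok b \<longleftrightarrow> (\<forall>m::nat. b \<noteq> - of_nat m)"

definition hyp3F2_term :: "nat \<Rightarrow> complex \<Rightarrow> complex \<Rightarrow> complex \<Rightarrow> complex \<Rightarrow> complex \<Rightarrow> complex" where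
  "hyp3F2_term n a2 a3 b1 b2 z =
     (\<Sum>k\<le>n. pochhammer (- of_nat n) k * pochhammer a2 k * pochhammer a3 k
        / (fact k * pochhammer b1 k * pochhammer b2 k) * z ^ k)"

definition FR :: "nat \<Rightarrow> complex \<Rightarrow> complex \<Rightarrow> complex" where
  "FR n a c = hyp3F2_term n (a - c - of_nat n) c ((a - of_nat n) / 2) ((1 + a - of_nat n) / 2) (1/4)"

definition R_defined :: "nat \<Rightarrow> complex \<Rightarrow> complex \<Rightarrow> bool" where
  "R_defined n a c \<longleftrightarrow> lower_ok ((a - of_nat n) / 2) \<and> lower_ok ((1 + a - of_nat n) / 2)"

definition Rt :: "nat \<Rightarrow> complex \<Rightarrow> complex \<Rightarrow> complex" where
  "Rt n a c = pochhammer (1 - a) n * pochhammer a n * FR n a c"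

definition V_args :: "nat \<Rightarrow> complex \<Rightarrow> complex \<Rightarrow> complex \<Rightarrow> complex \<times> complex" where
  "V_args n x y z = ((2 + 2*x - y - z - of_nat n) / 3, (1 + x + y - 2*z - 2 * of_nat n) / 3)"

definition Vt :: "nat \<Rightarrow> complex \<Rightarrow> complex \<Rightarrow> complex \<Rightarrow> complex" where
  "Vt n x y z = Rt n (fst (V_args n x y z)) (snd (V_args n x y z))"

definition V_defined :: "nat \<Rightarrow> complex \<Rightarrow> complex \<Rightarrow> complex \<Rightarrow> bool" where
  "V_defined n x y z = R_defined n (fst (V_args n x y z)) (snd (V_args n x y z))"

definition sig :: "nat \<Rightarrow> complex \<times> complex \<Rightarrow> complex \<times> complex" where
  "sig n p = (fst p, fst p - snd p - of_nat n)"

definition tau :: "complex \<times> complex \<Rightarrow> complex \<times> complex" where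
  "tau p = (1 + snd p - fst p, snd p)"

end

theory Submission imports Defs "HOL-Computational_Algebra.Polynomial" begin

definition S1 :: "nat \<Rightarrow> complex \<Rightarrow> complex \<Rightarrow> complex" where
  "S1 n b c = (\<Sum>k\<le>n. (-1)^k * of_nat (n choose k) * pochhammer b k * pochhammer c k
       * pochhammer (b + c + of_nat (2*k)) (2*n - 2*k))"

definition S2 :: "nat \<Rightarrow> complex \<Rightarrow> complex \<Rightarrow> complex" where
  "S2 n b c = (\<Sum>k\<le>n. of_nat (n choose k) * pochhammer c k
       * pochhammer (b + c + of_nat (2*n - k)) k * pochhammer b (2*n - 2*k))"

definition LL :: "nat \<Rightarrow> complex \<Rightarrow> complex \<Rightarrow> complex poly \<Rightarrow> complex" where
  "LL n b c p = (\<Sum>m\<le>2*n. coeff p m * pochhammer b m * pochhammer c (2*n - m))"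

lemma LL_sum: "LL n b c (sum f K) = (\<Sum>k\<in>K. LL n b c (f k))"
  unfolding LL_def by (simp add: coeff_sum sum_distrib_right sum.swap[of _ K])

lemma LL_smult: "LL n b c (smult s p) = s * LL n b c p"
  unfolding LL_def by (simp add: sum_distrib_left mult_ac)

lemma LL_mon:
  assumes "i + N \<le> 2*n"
  shows "LL n b c (monom 1 i * [:1,1:]^N)
     = pochhammer b i * pochhammer c (2*n - i - N) * pochhammer (b + c + of_nat (2*n - N)) N"
proof -
  define f where "f m = coeff (monom 1 i * [:1::complex,1:]^N) m * pochhammer b m * pochhammer c (2*n - m)" for m
  have f0: "f m = 0" if "m \<notin> {i..i+N}" for m
  proof (cases "m < i")
    case True then show ?thesis by (simp add: f_def coeff_monom_mult)
  next
    case False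
    then have "N < m - i" using that by auto
    then show ?thesis using False
      by (simp add: f_def coeff_monom_mult coeff_eq_0 degree_linear_power)
  qed
  have "LL n b c (monom 1 i * [:1,1:]^N) = sum f {..2*n}" unfolding LL_def f_def ..
  also have "\<dots> = sum f {i..i+N}"
    by (rule sum.mono_neutral_right) (use assms f0 in auto)
  also have "\<dots> = (\<Sum>j\<le>N. f (i + j))"
  proof -
    have se: "{i..i+N} = (\<lambda>j. i + j) ` {..N}"
    proof (auto simp: image_iff)
      fix x assume "i \<le> x" "x \<le> i + N"
      then show "\<exists>xa\<in>{..N}. x = i + xa" by (intro bexI[of _ "x - i"]) auto
    qed
    have "sum f {i..i+N} = sum f ((\<lambda>j. i + j) ` {..N})" by (simp only: se)
    also have "\<dots> = (\<Sum>j\<le>N. f (i + j))" by (subst sum.reindex) (auto simp: inj_on_def)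
    finally show ?thesis .
  qed
  also have "\<dots> = (\<Sum>j\<le>N. pochhammer b i * pochhammer c (2*n - i - N) *
       (of_nat (N choose j) * pochhammer (b + of_nat i) j * pochhammer (c + of_nat (2*n - i - N)) (N - j)))"
  proof (rule sum.cong[OF refl])
    fix j assume j: "j \<in> {..N}"
    have c1: "coeff (monom 1 i * [:1::complex,1:]^N) (i + j) = of_nat (N choose j)"
      using j by (simp add: coeff_monom_mult coeff_linear_poly_power)
    have c2: "pochhammer b (i + j) = pochhammer b i * pochhammer (b + of_nat i) j"
      by (rule pochhammer_product')
    have e: "2*n - (i+j) = (2*n - i - N) + (N - j)" using j assms by auto
    have c3: "pochhammer c (2*n - (i + j)) = pochhammer c (2*n - i - N) * pochhammer (c + of_nat (2*n - i - N)) (N - j)"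
      unfolding e by (rule pochhammer_product')
    show "f (i + j) = pochhammer b i * pochhammer c (2*n - i - N) *
       (of_nat (N choose j) * pochhammer (b + of_nat i) j * pochhammer (c + of_nat (2*n - i - N)) (N - j))" unfolding f_def c1 c2 c3 by (simp add: mult_ac)
  qed
  also have "\<dots> = pochhammer b i * pochhammer c (2*n - i - N) *
       pochhammer (b + of_nat i + (c + of_nat (2*n - i - N))) N"
    by (simp add: pochhammer_binomial_sum sum_distrib_left)
  also have "b + of_nat i + (c + of_nat (2*n - i - N)) = b + c + of_nat (2*n - N)"
    using assms by (simp add: of_nat_diff)
  finally show ?thesis .
qed

lemma S1_LL: "S1 n b c = LL n b c ([:1,1,1:]^n)"
proof -
  have p: "[:1,1,1:] = [:0,-1::complex:] + [:1,1:]^2"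
    by (simp add: power2_eq_square)
  have m: "[:0,-1::complex:]^k = smult ((-1)^k) (monom 1 k)" for k
  proof -
    have h: "[:0,-1::complex:] = smult (-1) (monom 1 1)" by (simp add: monom_Suc)
    show ?thesis by (simp only: h smult_power monom_power) simp
  qed
  have "[:1,1,1:]^n = (\<Sum>k\<le>n. smult ((-1)^k * of_nat (n choose k)) (monom 1 k * [:1,1::complex:]^(2*n-2*k)))"
    unfolding p binomial_ring
  proof (rule sum.cong[OF refl])
    fix k assume k: "k \<in> {..n}"
    have e: "2*n - 2*k = 2*(n-k)" by simp
    show "of_nat (n choose k) * [:0, - 1:] ^ k * ([:1, 1:]^2) ^ (n - k) =
         smult ((- 1) ^ k * of_nat (n choose k)) (monom 1 k * [:1, 1::complex:] ^ (2 * n - 2 * k))"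
      unfolding m e power_mult by (simp add: of_nat_poly mult_ac)
  qed
  then have "LL n b c ([:1,1,1:]^n) = (\<Sum>k\<le>n. ((-1)^k * of_nat (n choose k)) * LL n b c (monom 1 k * [:1,1::complex:]^(2*n-2*k)))"
    by (simp add: LL_sum LL_smult)
  also have "\<dots> = S1 n b c"
    unfolding S1_def
  proof (rule sum.cong[OF refl])
    fix k assume k: "k \<in> {..n}"
    then have "k + (2*n - 2*k) \<le> 2*n" by auto
    from LL_mon[OF this, of b c] k show "((-1)^k * of_nat (n choose k)) * LL n b c (monom 1 k * [:1,1::complex:]^(2*n-2*k)) =
      (-1)^k * of_nat (n choose k) * pochhammer b k * pochhammer c k
       * pochhammer (b + c + of_nat (2*k)) (2*n - 2*k)"
      by (simp add: mult_ac)
  qed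
  finally show ?thesis by simp
qed

lemma S2_LL: "S2 n b c = LL n b c ([:1,1,1:]^n)"
proof -
  have p: "[:1,1,1:] = [:1,1::complex:] + monom 1 2"
    by (simp add: monom_Suc numeral_2_eq_2)
  have "[:1,1,1:]^n = (\<Sum>k\<le>n. smult (of_nat (n choose k)) (monom 1 (2*n-2*k) * [:1,1::complex:]^k))"
    unfolding p binomial_ring
  proof (rule sum.cong[OF refl])
    fix k assume k: "k \<in> {..n}"
    have e: "2*n - 2*k = 2*(n-k)" by simp
    show "of_nat (n choose k) * [:1, 1:] ^ k * (monom 1 2) ^ (n - k) =
         smult (of_nat (n choose k)) (monom 1 (2*n-2*k) * [:1, 1::complex:] ^ k)"
      unfolding e by (simp add: of_nat_poly monom_power mult_ac)
  qed
  then have "LL n b c ([:1,1,1:]^n) = (\<Sum>k\<le>n. of_nat (n choose k) * LL n b c (monom 1 (2*n-2*k) * [:1,1::complex:]^k))"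
    by (simp add: LL_sum LL_smult)
  also have "\<dots> = S2 n b c"
    unfolding S2_def
  proof (rule sum.cong[OF refl])
    fix k assume k: "k \<in> {..n}"
    then have "(2*n - 2*k) + k \<le> 2*n" by auto
    moreover have "2*n - (2*n-2*k) - k = k" using k by auto
    moreover have "2*n - k = 2*n - k" ..
    ultimately show "of_nat (n choose k) * LL n b c (monom 1 (2*n-2*k) * [:1,1::complex:]^k) =
      of_nat (n choose k) * pochhammer c k
       * pochhammer (b + c + of_nat (2*n - k)) k * pochhammer b (2*n - 2*k)"
      using LL_mon[of "2*n-2*k" k n b c] by (simp add: mult_ac)
  qed
  finally show ?thesis by simp
qed

lemma S1_S2: "S1 n b c = S2 n b c"
  by (simp add: S1_LL S2_LL)

definition Q :: "nat \<Rightarrow> complex \<Rightarrow> complex \<Rightarrow> complex" where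
  "Q n a c = (-1)^n * S1 n (a - c - of_nat n) c"

lemma poch_refl: "pochhammer (z::complex) k = (-1)^k * pochhammer (- z - of_nat k + 1) k"
  using pochhammer_minus[of "-z" k] by simp

lemma lower_ok_poch: "lower_ok z \<Longrightarrow> pochhammer z k \<noteq> 0"
  unfolding lower_ok_def by (auto simp: pochhammer_eq_0_iff)

lemma Rt_Q:
  assumes "R_defined n a c"
  shows "Rt n a c = Q n a c"
proof -
  define b where "b = a - c - of_nat n"
  let ?p1 = "\<lambda>k. pochhammer ((a - of_nat n)/2) k"
  let ?p2 = "\<lambda>k. pochhammer ((1 + a - of_nat n)/2) k"
  have nz1: "?p1 k \<noteq> 0" and nz2: "?p2 k \<noteq> 0" for k
    using assms unfolding R_defined_def by (simp_all add: lower_ok_poch)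
  have F1: "pochhammer (1 - a) n * pochhammer a n = (-1)^n * pochhammer (a - of_nat n) (2*n)"
  proof -
    have "pochhammer (1 - a) n = (-1)^n * pochhammer (a - of_nat n) n"
      using poch_refl[of "1-a" n] by simp
    moreover have "pochhammer (a - of_nat n) (n + n) = pochhammer (a - of_nat n) n * pochhammer a n"
      using pochhammer_product'[of "a - of_nat n" n n] by simp
    ultimately show ?thesis by (simp add: mult_2)
  qed
  have F3: "?p1 k * ?p2 k * 4^k = pochhammer (a - of_nat n) (2*k)" for k
  proof -
    have "pochhammer (2 * ((a - of_nat n)/2)) (2*k) = of_nat (2^(2*k)) * ?p1 k * pochhammer ((a - of_nat n)/2 + 1/2) k"
      by (rule pochhammer_double)
    moreover have "(a - of_nat n)/2 + 1/2 = (1 + a - of_nat n)/2" by (simp add: field_simps)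
    moreover have "(of_nat (2^(2*k)) :: complex) = 4^k" by (simp add: power_mult)
    moreover have "2 * ((a - of_nat n)/2) = a - of_nat n" by simp
    ultimately show ?thesis by (simp only: mult_ac)
  qed
  have F4: "pochhammer (- of_nat n) k / fact k = (-1)^k * (of_nat (n choose k) :: complex)" for k
  proof -
    have "(of_nat (n choose k) :: complex) = (-1)^k * pochhammer (- of_nat n) k / fact k"
      by (simp add: binomial_gbinomial gbinomial_pochhammer)
    then show ?thesis by simp
  qed
  have "Rt n a c = (\<Sum>k\<le>n. (pochhammer (1 - a) n * pochhammer a n) * (pochhammer (- of_nat n) k * pochhammer b k * pochhammer c k
        / (fact k * ?p1 k * ?p2 k) * (1/4)^k))"
    unfolding Rt_def FR_def hyp3F2_term_def b_def by (simp add: sum_distrib_left)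
  also have "\<dots> = (\<Sum>k\<le>n. (-1)^n * ((-1)^k * of_nat (n choose k) * pochhammer b k * pochhammer c k
       * pochhammer (b + c + of_nat (2*k)) (2*n - 2*k)))"
  proof (rule sum.cong[OF refl])
    fix k assume k: "k \<in> {..n}"
    have F2: "pochhammer (a - of_nat n) (2*n) = pochhammer (a - of_nat n) (2*k) * pochhammer (b + c + of_nat (2*k)) (2*n - 2*k)"
      using pochhammer_product[of "2*k" "2*n" "a - of_nat n"] k by (simp add: b_def)
    have nz: "pochhammer (a - of_nat n) (2*k) \<noteq> 0" using F3[of k] nz1[of k] nz2[of k] by (metis mult_eq_0_iff power_not_zero zero_neq_numeral)
    have "pochhammer (- of_nat n) k * pochhammer b k * pochhammer c k / (fact k * ?p1 k * ?p2 k) * (1/4)^k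
        = (pochhammer (- of_nat n) k / fact k) * pochhammer b k * pochhammer c k / (?p1 k * ?p2 k * 4^k)"
      by (simp add: field_simps power_one_over)
    also have "\<dots> = (-1)^k * of_nat (n choose k) * pochhammer b k * pochhammer c k / pochhammer (a - of_nat n) (2*k)"
      unfolding F4 F3 ..
    finally have T: "pochhammer (- of_nat n) k * pochhammer b k * pochhammer c k / (fact k * ?p1 k * ?p2 k) * (1/4)^k
        = (-1)^k * of_nat (n choose k) * pochhammer b k * pochhammer c k / pochhammer (a - of_nat n) (2*k)" .
    show "(pochhammer (1 - a) n * pochhammer a n) * (pochhammer (- of_nat n) k * pochhammer b k * pochhammer c k
        / (fact k * ?p1 k * ?p2 k) * (1/4)^k) = (-1)^n * ((-1)^k * of_nat (n choose k) * pochhammer b k * pochhammer c k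
       * pochhammer (b + c + of_nat (2*k)) (2*n - 2*k))"
      unfolding T F1 F2 using nz by (simp add: field_simps)
  qed
  also have "\<dots> = Q n a c" unfolding Q_def S1_def b_def by (simp add: sum_distrib_left)
  finally show ?thesis .
qed

lemma S1_sym: "S1 n b c = S1 n c b"
  unfolding S1_def by (simp add: mult_ac add_ac)

lemma Q_sig: "Q n a (a - c - of_nat n) = Q n a c"
  unfolding Q_def using S1_sym by simp

lemma Q_tau: "Q n (1 + c - a) c = Q n a c"
proof -
  have "S1 n (1 + c - a - c - of_nat n) c = S2 n (a - c - of_nat n) c"
    unfolding S1_def S2_def
  proof (rule sum.cong[OF refl])
    fix k assume k: "k \<in> {..n}"
    have e1: "pochhammer (1 + c - a - c - of_nat n) k = (-1)^k * pochhammer (a - c - of_nat n + c + of_nat (2 * n - k)) k"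
      using poch_refl[of "1 + c - a - c - of_nat n" k] k by (simp add: of_nat_diff algebra_simps)
    have e2: "pochhammer (1 + c - a - c - of_nat n + c + of_nat (2 * k)) (2 * n - 2 * k) = pochhammer (a - c - of_nat n) (2 * n - 2 * k)"
      using poch_refl[of "1 + c - a - c - of_nat n + c + of_nat (2 * k)" "2*n-2*k"] k
      by (simp add: of_nat_diff algebra_simps power_mult)
    show "(-1)^k * of_nat (n choose k) * pochhammer (1 + c - a - c - of_nat n) k * pochhammer c k
       * pochhammer (1 + c - a - c - of_nat n + c + of_nat (2*k)) (2*n - 2*k) =
       of_nat (n choose k) * pochhammer c k
       * pochhammer (a - c - of_nat n + c + of_nat (2*n - k)) k * pochhammer (a - c - of_nat n) (2*n - 2*k)"
      unfolding e1 e2 by (simp add: mult_ac flip: power_add)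
  qed
  then show ?thesis unfolding Q_def by (simp add: S1_S2)
qed

theorem mainTheorem13:
  fixes n :: nat
  shows
   "(\<forall>a c::complex. R_defined n a c \<and> R_defined n (1 + c - a) c
        \<and> pochhammer (1 - a) n * pochhammer a n \<noteq> 0 \<longrightarrow>
      FR n a c = pochhammer (1 + c - a) n * pochhammer (a - c) n
                 / (pochhammer (1 - a) n * pochhammer a n)
                 * hyp3F2_term n (1 - a - of_nat n) c ((1 + c - a - of_nat n) / 2)
                     ((2 + c - a - of_nat n) / 2) (1/4))
    \<and> (\<forall>a c::complex. R_defined n a c \<and> R_defined n (1 + c - a) c \<longrightarrow>
         Rt n a c = Rt n (1 + c - a) c)
    \<and> (sig n \<circ> sig n = id \<and> tau \<circ> tau = id \<and> (sig n \<circ> tau) ^^ 3 = id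
       \<and> sig n \<noteq> id \<and> tau \<noteq> id \<and> sig n \<noteq> tau)
    \<and> (\<forall>a c::complex. \<forall>(a', c') \<in> {(a, c), (a, a - c - of_nat n), (1 + c - a, c),
          (1 + c - a, 1 - a - of_nat n), (1 - c - of_nat n, a - c - of_nat n),
          (1 - c - of_nat n, 1 - a - of_nat n)}.
         R_defined n a c \<and> R_defined n a' c' \<longrightarrow> Rt n a c = Rt n a' c')
    \<and> (\<forall>x y z::complex. \<forall>(x', y', z') \<in> {(x, y, z), (x, z, y), (y, x, z), (y, z, x),
          (z, x, y), (z, y, x)}.
         V_defined n x y z \<and> V_defined n x' y' z' \<longrightarrow> Vt n x y z = Vt n x' y' z')"
proof -
  have RQ: "R_defined n a c \<Longrightarrow> Rt n a c = Q n a c" for a c by (rule Rt_Q)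
  have P1: "\<forall>a c::complex. R_defined n a c \<and> R_defined n (1 + c - a) c
        \<and> pochhammer (1 - a) n * pochhammer a n \<noteq> 0 \<longrightarrow>
      FR n a c = pochhammer (1 + c - a) n * pochhammer (a - c) n
                 / (pochhammer (1 - a) n * pochhammer a n)
                 * hyp3F2_term n (1 - a - of_nat n) c ((1 + c - a - of_nat n) / 2)
                     ((2 + c - a - of_nat n) / 2) (1/4)"
  proof (intro allI impI, elim conjE)
    fix a c :: complex
    assume d1: "R_defined n a c" and d2: "R_defined n (1 + c - a) c"
      and nz: "pochhammer (1 - a) n * pochhammer a n \<noteq> 0"
    have "Rt n a c = Rt n (1 + c - a) c" using RQ[OF d1] RQ[OF d2] Q_tau by simp
    moreover have "FR n (1 + c - a) c = hyp3F2_term n (1 - a - of_nat n) c ((1 + c - a - of_nat n) / 2)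
                     ((2 + c - a - of_nat n) / 2) (1/4)"
    proof -
      have "1 + c - a - c - of_nat n = 1 - a - of_nat n" by simp
      moreover have "1 + (1 + c - a) - of_nat n = 2 + c - a - of_nat n" by simp
      ultimately show ?thesis unfolding FR_def by (simp only:)
    qed
    ultimately show "FR n a c = pochhammer (1 + c - a) n * pochhammer (a - c) n
                 / (pochhammer (1 - a) n * pochhammer a n)
                 * hyp3F2_term n (1 - a - of_nat n) c ((1 + c - a - of_nat n) / 2)
                     ((2 + c - a - of_nat n) / 2) (1/4)"
      using nz unfolding Rt_def by (simp add: field_simps)
  qed
  have P2: "\<forall>a c::complex. R_defined n a c \<and> R_defined n (1 + c - a) c \<longrightarrow>
         Rt n a c = Rt n (1 + c - a) c"
    using RQ Q_tau by simp
  have P3: "sig n \<circ> sig n = id \<and> tau \<circ> tau = id \<and> (sig n \<circ> tau) ^^ 3 = id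
       \<and> sig n \<noteq> id \<and> tau \<noteq> id \<and> sig n \<noteq> tau"
  proof (intro conjI)
    show "sig n \<circ> sig n = id" by (auto simp: sig_def fun_eq_iff)
    show "tau \<circ> tau = id" by (auto simp: tau_def fun_eq_iff)
    show "(sig n \<circ> tau) ^^ 3 = id" by (auto simp: sig_def tau_def fun_eq_iff numeral_3_eq_3)
    show "sig n \<noteq> id"
    proof
      assume "sig n = id"
      then have "sig n (0, 1) = (0, 1)" by simp
      then have "(-1 - of_nat n :: complex) = 1" by (simp add: sig_def)
      then have "(of_nat (n + 2) :: complex) = 0" by (simp add: algebra_simps)
      then show False by (simp only: of_nat_eq_0_iff)
    qed
    show "tau \<noteq> id"
    proof
      assume "tau = id"
      then have "tau (0, 0) = (0, 0)" by simp
      then show False by (simp add: tau_def)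
    qed
    show "sig n \<noteq> tau"
    proof
      assume "sig n = tau"
      then have "sig n (0, 0) = tau (0, 0)" by simp
      then show False by (simp add: tau_def sig_def)
    qed
  qed
  have orb: "\<forall>(a', c') \<in> {(a, c), (a, a - c - of_nat n), (1 + c - a, c),
          (1 + c - a, 1 - a - of_nat n), (1 - c - of_nat n, a - c - of_nat n),
          (1 - c - of_nat n, 1 - a - of_nat n)}. Q n a' c' = Q n a c" for a c :: complex
  proof -
    have q1: "Q n a (a - c - of_nat n) = Q n a c" by (rule Q_sig)
    have q2: "Q n (1 + c - a) c = Q n a c" by (rule Q_tau)
    have q3: "Q n (1 + c - a) (1 - a - of_nat n) = Q n a c"
      using Q_sig[of n "1 + c - a" c] q2 by (simp add: algebra_simps)
    have q4: "Q n (1 - c - of_nat n) (a - c - of_nat n) = Q n a c"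
      using Q_tau[of n "a - c - of_nat n" a] q1 by (simp add: algebra_simps)
    have q5: "Q n (1 - c - of_nat n) (1 - a - of_nat n) = Q n a c"
      using Q_sig[of n "1 - c - of_nat n" "a - c - of_nat n"] q4 by (simp add: algebra_simps)
    show ?thesis using q1 q2 q3 q4 q5 by auto
  qed
  have P4: "\<forall>a c::complex. \<forall>(a', c') \<in> {(a, c), (a, a - c - of_nat n), (1 + c - a, c),
          (1 + c - a, 1 - a - of_nat n), (1 - c - of_nat n, a - c - of_nat n),
          (1 - c - of_nat n, 1 - a - of_nat n)}.
         R_defined n a c \<and> R_defined n a' c' \<longrightarrow> Rt n a c = Rt n a' c'"
  proof (intro allI ballI impI, clarify)
    fix a c a' c' :: complex
    assume m: "(a', c') \<in> {(a, c), (a, a - c - of_nat n), (1 + c - a, c),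
          (1 + c - a, 1 - a - of_nat n), (1 - c - of_nat n, a - c - of_nat n),
          (1 - c - of_nat n, 1 - a - of_nat n)}"
      and d1: "R_defined n a c" and d2: "R_defined n a' c'"
    have "Q n a' c' = Q n a c" using orb[of a c] m by blast
    then show "Rt n a c = Rt n a' c'" using RQ[OF d1] RQ[OF d2] by simp
  qed
  define Qv where "Qv x y z = Q n (fst (V_args n x y z)) (snd (V_args n x y z))" for x y z
  have v1: "Qv x z y = Qv x y z" for x y z
  proof -
    have "fst (V_args n x z y) = fst (V_args n x y z)" by (simp add: V_args_def algebra_simps)
    moreover have "snd (V_args n x z y) = fst (V_args n x y z) - snd (V_args n x y z) - of_nat n"
      by (simp add: V_args_def field_simps)
    ultimately show ?thesis unfolding Qv_def by (simp add: Q_sig)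
  qed
  have v2: "Qv y x z = Qv x y z" for x y z
  proof -
    have "fst (V_args n y x z) = 1 + snd (V_args n x y z) - fst (V_args n x y z)"
      by (simp add: V_args_def field_simps)
    moreover have "snd (V_args n y x z) = snd (V_args n x y z)"
      by (simp add: V_args_def algebra_simps)
    ultimately show ?thesis unfolding Qv_def by (simp add: Q_tau)
  qed
  have VQ: "V_defined n x y z \<Longrightarrow> Vt n x y z = Qv x y z" for x y z
    unfolding V_defined_def Vt_def Qv_def by (rule Rt_Q)
  have P5: "\<forall>x y z::complex. \<forall>(x', y', z') \<in> {(x, y, z), (x, z, y), (y, x, z), (y, z, x),
          (z, x, y), (z, y, x)}.
         V_defined n x y z \<and> V_defined n x' y' z' \<longrightarrow> Vt n x y z = Vt n x' y' z'"
  proof (intro allI ballI impI, clarify)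
    fix x y z x' y' z' :: complex
    assume m: "(x', y', z') \<in> {(x, y, z), (x, z, y), (y, x, z), (y, z, x),
          (z, x, y), (z, y, x)}"
      and d1: "V_defined n x y z" and d2: "V_defined n x' y' z'"
    have "Qv x' y' z' = Qv x y z" using m v1 v2 by auto
    then show "Vt n x y z = Vt n x' y' z'" using VQ[OF d1] VQ[OF d2] by simp
  qed
  show ?thesis using P1 P2 P3 P4 P5 by blast
qed

end
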